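(* Let $L$ be an IL-algebra with greatest element $\top$, and let $F$ be an affine filter of $L$. Then $L/F$, with operations $[x]\cup[y]=[x\cup y]$, $[x]\cap[y]=[x\cap y]$, $[x]\ast[y]=[x\ast y]$, $[x]\to[y]=[x\to y]$, least element $[\bot]$ and unit $[1]$, is a residuated lattice.
   Context: An IL-algebra is a structure $(L,\cup,\cap,\bot,\to,\ast,1)$ such that $(L,\cup,\cap,\bot)$ is a lattice with least element $\bot$, $(L,\ast,1)$ is a commutative monoid with unit $1$, and for all $x,y,z\in L$: $x\ast y\leq z$ iff $x\leq y\to z$; it has a greatest element $\top=\bot\to\bot$. A filter of $L$ is a non-empty $F\subseteq L$ with $1\in F$, such that $x,y\in F$ implies $x\ast y\in F$ and $x\cap y\in F$, and $x\in F$, $x\leq y$ implies $y\in F$. A filter $F$ is affine if $\top\to1\in F$. For a filter $F$, $x\,\rho_F\,y$ iff $x\to y\in F$ and $y\to x\in F$; $[x]$ is the $\rho_F$-class of $x$ and $L/F=\{[x]:x\in L\}$. A residuated lattice is a structure $(L,\cup,\cap,0,\to,\ast,1)$ such that $(L,\cup,\cap,0,1)$ is a bounded lattice with least element $0$ and greatest element $1$, $(L,\ast,1)$ is a commutative monoid, and $x\ast y\leq z$ iff $x\leq y\to z$ for all $x,y,z$. *)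

theory Defs
  imports Main
begin

definition lat_le :: "('a \<Rightarrow> 'a \<Rightarrow> 'a) \<Rightarrow> 'a \<Rightarrow> 'a \<Rightarrow> bool" where
  "lat_le meet x y \<longleftrightarrow> meet x y = x"

definition is_lattice :: "'a set \<Rightarrow> ('a \<Rightarrow> 'a \<Rightarrow> 'a) \<Rightarrow> ('a \<Rightarrow> 'a \<Rightarrow> 'a) \<Rightarrow> bool" where
  "is_lattice L join meet \<longleftrightarrow>
     (\<forall>x\<in>L. \<forall>y\<in>L. join x y \<in> L \<and> meet x y \<in> L) \<and>
     (\<forall>x\<in>L. \<forall>y\<in>L. join x y = join y x \<and> meet x y = meet y x) \<and>
     (\<forall>x\<in>L. \<forall>y\<in>L. \<forall>z\<in>L. join (join x y) z = join x (join y z) \<and>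
                           meet (meet x y) z = meet x (meet y z)) \<and>
     (\<forall>x\<in>L. \<forall>y\<in>L. join x (meet x y) = x \<and> meet x (join x y) = x)"

definition is_comm_monoid :: "'a set \<Rightarrow> ('a \<Rightarrow> 'a \<Rightarrow> 'a) \<Rightarrow> 'a \<Rightarrow> bool" where
  "is_comm_monoid L mult e \<longleftrightarrow>
     e \<in> L \<and>
     (\<forall>x\<in>L. \<forall>y\<in>L. mult x y \<in> L) \<and>
     (\<forall>x\<in>L. \<forall>y\<in>L. \<forall>z\<in>L. mult (mult x y) z = mult x (mult y z)) \<and>
     (\<forall>x\<in>L. \<forall>y\<in>L. mult x y = mult y x) \<and>
     (\<forall>x\<in>L. mult x e = x)"

definition residuated :: "'a set \<Rightarrow> ('a \<Rightarrow> 'a \<Rightarrow> 'a) \<Rightarrow> ('a \<Rightarrow> 'a \<Rightarrow> 'a) \<Rightarrow> ('a \<Rightarrow> 'a \<Rightarrow> 'a) \<Rightarrow> bool" where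
  "residuated L meet imp mult \<longleftrightarrow>
     (\<forall>x\<in>L. \<forall>y\<in>L. imp x y \<in> L) \<and>
     (\<forall>x\<in>L. \<forall>y\<in>L. \<forall>z\<in>L. lat_le meet (mult x y) z \<longleftrightarrow> lat_le meet x (imp y z))"

definition IL_algebra :: "'a set \<Rightarrow> ('a \<Rightarrow> 'a \<Rightarrow> 'a) \<Rightarrow> ('a \<Rightarrow> 'a \<Rightarrow> 'a) \<Rightarrow> 'a \<Rightarrow>
    ('a \<Rightarrow> 'a \<Rightarrow> 'a) \<Rightarrow> ('a \<Rightarrow> 'a \<Rightarrow> 'a) \<Rightarrow> 'a \<Rightarrow> bool" where
  "IL_algebra L join meet bt imp mult e \<longleftrightarrow>
     is_lattice L join meet \<and>
     bt \<in> L \<and> (\<forall>x\<in>L. lat_le meet bt x) \<and>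
     is_comm_monoid L mult e \<and>
     residuated L meet imp mult"

definition residuated_lattice :: "'a set \<Rightarrow> ('a \<Rightarrow> 'a \<Rightarrow> 'a) \<Rightarrow> ('a \<Rightarrow> 'a \<Rightarrow> 'a) \<Rightarrow> 'a \<Rightarrow>
    ('a \<Rightarrow> 'a \<Rightarrow> 'a) \<Rightarrow> ('a \<Rightarrow> 'a \<Rightarrow> 'a) \<Rightarrow> 'a \<Rightarrow> bool" where
  "residuated_lattice L join meet z0 imp mult e \<longleftrightarrow>
     is_lattice L join meet \<and>
     z0 \<in> L \<and> (\<forall>x\<in>L. lat_le meet z0 x) \<and>
     e \<in> L \<and> (\<forall>x\<in>L. lat_le meet x e) \<and>
     is_comm_monoid L mult e \<and>
     residuated L meet imp mult"

definition IL_filter :: "'a set \<Rightarrow> ('a \<Rightarrow> 'a \<Rightarrow> 'a) \<Rightarrow> ('a \<Rightarrow> 'a \<Rightarrow> 'a) \<Rightarrow> 'a \<Rightarrow> 'a set \<Rightarrow> bool" where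
  "IL_filter L meet mult e F \<longleftrightarrow>
     F \<subseteq> L \<and> F \<noteq> {} \<and> e \<in> F \<and>
     (\<forall>x\<in>F. \<forall>y\<in>F. mult x y \<in> F \<and> meet x y \<in> F) \<and>
     (\<forall>x\<in>F. \<forall>y\<in>L. lat_le meet x y \<longrightarrow> y \<in> F)"

text \<open>Affine filter: top \<rightarrow> 1 \<in> F, where top = bt \<rightarrow> bt.\<close>
definition affine_filter :: "'a set \<Rightarrow> ('a \<Rightarrow> 'a \<Rightarrow> 'a) \<Rightarrow> 'a \<Rightarrow> ('a \<Rightarrow> 'a \<Rightarrow> 'a) \<Rightarrow>
    ('a \<Rightarrow> 'a \<Rightarrow> 'a) \<Rightarrow> 'a \<Rightarrow> 'a set \<Rightarrow> bool" where
  "affine_filter L meet bt imp mult e F \<longleftrightarrow>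
     IL_filter L meet mult e F \<and> imp (imp bt bt) e \<in> F"

definition fclass :: "'a set \<Rightarrow> ('a \<Rightarrow> 'a \<Rightarrow> 'a) \<Rightarrow> 'a set \<Rightarrow> 'a \<Rightarrow> 'a set" where
  "fclass L imp F x = {y\<in>L. imp x y \<in> F \<and> imp y x \<in> F}"

definition quot :: "'a set \<Rightarrow> ('a \<Rightarrow> 'a \<Rightarrow> 'a) \<Rightarrow> 'a set \<Rightarrow> 'a set set" where
  "quot L imp F = fclass L imp F ` L"

text \<open>Operation on classes induced by an operation on representatives
  (via a chosen representative; the theorem states independence of representatives).\<close>
definition qop :: "'a set \<Rightarrow> ('a \<Rightarrow> 'a \<Rightarrow> 'a) \<Rightarrow> 'a set \<Rightarrow> ('a \<Rightarrow> 'a \<Rightarrow> 'a) \<Rightarrow>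
    'a set \<Rightarrow> 'a set \<Rightarrow> 'a set" where
  "qop L imp F f A B = fclass L imp F (f (SOME a. a \<in> A) (SOME b. b \<in> B))"

end

theory Submission
  imports Defs
begin

locale ILF =
  fixes L :: "'a set" and F :: "'a set"
    and join meet imp mult :: "'a \<Rightarrow> 'a \<Rightarrow> 'a" and bt e :: 'a
  assumes A1: "IL_algebra L join meet bt imp mult e"
    and A2: "affine_filter L meet bt imp mult e F"
begin

abbreviation le where "le x y \<equiv> lat_le meet x y"

lemma jc: "x \<in> L \<Longrightarrow> y \<in> L \<Longrightarrow> join x y \<in> L"
  using A1 unfolding IL_algebra_def is_lattice_def is_comm_monoid_def residuated_def by auto

lemma mc: "x \<in> L \<Longrightarrow> y \<in> L \<Longrightarrow> meet x y \<in> L"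
  using A1 unfolding IL_algebra_def is_lattice_def is_comm_monoid_def residuated_def by auto

lemma jcomm: "x \<in> L \<Longrightarrow> y \<in> L \<Longrightarrow> join x y = join y x"
  using A1 unfolding IL_algebra_def is_lattice_def is_comm_monoid_def residuated_def by auto

lemma mcomm: "x \<in> L \<Longrightarrow> y \<in> L \<Longrightarrow> meet x y = meet y x"
  using A1 unfolding IL_algebra_def is_lattice_def is_comm_monoid_def residuated_def by auto

lemma jassoc: "x \<in> L \<Longrightarrow> y \<in> L \<Longrightarrow> z \<in> L \<Longrightarrow> join (join x y) z = join x (join y z)"
  using A1 unfolding IL_algebra_def is_lattice_def is_comm_monoid_def residuated_def by auto

lemma massoc: "x \<in> L \<Longrightarrow> y \<in> L \<Longrightarrow> z \<in> L \<Longrightarrow> meet (meet x y) z = meet x (meet y z)"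
  using A1 unfolding IL_algebra_def is_lattice_def is_comm_monoid_def residuated_def by auto

lemma abs1: "x \<in> L \<Longrightarrow> y \<in> L \<Longrightarrow> join x (meet x y) = x"
  using A1 unfolding IL_algebra_def is_lattice_def is_comm_monoid_def residuated_def by auto

lemma abs2: "x \<in> L \<Longrightarrow> y \<in> L \<Longrightarrow> meet x (join x y) = x"
  using A1 unfolding IL_algebra_def is_lattice_def is_comm_monoid_def residuated_def by auto

lemma btL: "bt \<in> L"
  using A1 unfolding IL_algebra_def by auto
lemma btle: "x \<in> L \<Longrightarrow> le bt x"
  using A1 unfolding IL_algebra_def is_lattice_def is_comm_monoid_def residuated_def by auto

lemma eL: "e \<in> L"
  using A1 unfolding IL_algebra_def is_lattice_def is_comm_monoid_def residuated_def by auto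

lemma muc: "x \<in> L \<Longrightarrow> y \<in> L \<Longrightarrow> mult x y \<in> L"
  using A1 unfolding IL_algebra_def is_lattice_def is_comm_monoid_def residuated_def by auto

lemma muassoc: "x \<in> L \<Longrightarrow> y \<in> L \<Longrightarrow> z \<in> L \<Longrightarrow> mult (mult x y) z = mult x (mult y z)"
  using A1 unfolding IL_algebra_def is_lattice_def is_comm_monoid_def residuated_def by auto

lemma mucomm: "x \<in> L \<Longrightarrow> y \<in> L \<Longrightarrow> mult x y = mult y x"
  using A1 unfolding IL_algebra_def is_lattice_def is_comm_monoid_def residuated_def by auto

lemma unit: "x \<in> L \<Longrightarrow> mult x e = x"
  using A1 unfolding IL_algebra_def is_lattice_def is_comm_monoid_def residuated_def by auto

lemma ic: "x \<in> L \<Longrightarrow> y \<in> L \<Longrightarrow> imp x y \<in> L"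
  using A1 unfolding IL_algebra_def is_lattice_def is_comm_monoid_def residuated_def by auto

lemma res: "x \<in> L \<Longrightarrow> y \<in> L \<Longrightarrow> z \<in> L \<Longrightarrow> le (mult x y) z \<longleftrightarrow> le x (imp y z)"
  using A1 unfolding IL_algebra_def is_lattice_def is_comm_monoid_def residuated_def by auto

lemma FL: "F \<subseteq> L"
  using A2 unfolding affine_filter_def IL_filter_def by auto
lemma eF: "e \<in> F"
  using A2 unfolding affine_filter_def IL_filter_def by auto

lemma Fmu: "x \<in> F \<Longrightarrow> y \<in> F \<Longrightarrow> mult x y \<in> F"
  using A2 unfolding affine_filter_def IL_filter_def by auto

lemma Fme: "x \<in> F \<Longrightarrow> y \<in> F \<Longrightarrow> meet x y \<in> F"
  using A2 unfolding affine_filter_def IL_filter_def by auto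

lemma Fup: "x \<in> F \<Longrightarrow> y \<in> L \<Longrightarrow> le x y \<Longrightarrow> y \<in> F"
  using A2 unfolding affine_filter_def IL_filter_def by auto

lemma aff: "imp (imp bt bt) e \<in> F"
  using A2 unfolding affine_filter_def IL_filter_def by auto

lemma midem: "x \<in> L \<Longrightarrow> meet x x = x"
proof -
  assume h: "x \<in> L"
  have "meet x x = meet x (join x (meet x x))" using abs1[OF h h] by simp
  also have "\<dots> = x" using abs2[OF h mc[OF h h]] .
  finally show ?thesis .
qed

lemma le_refl: "x \<in> L \<Longrightarrow> le x x"
  by (simp add: lat_le_def midem)

lemma le_trans: "x \<in> L \<Longrightarrow> y \<in> L \<Longrightarrow> z \<in> L \<Longrightarrow> le x y \<Longrightarrow> le y z \<Longrightarrow> le x z"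
  unfolding lat_le_def
proof -
  assume h: "x \<in> L" "y \<in> L" "z \<in> L" "meet x y = x" "meet y z = y"
  have "meet x z = meet (meet x y) z" using h(4) by simp
  also have "\<dots> = meet x (meet y z)" using massoc[OF h(1-3)] .
  also have "\<dots> = x" using h(4,5) by simp
  finally show "meet x z = x" .
qed

lemma lt: "x \<in> L \<Longrightarrow> y \<in> L \<Longrightarrow> z \<in> L \<Longrightarrow> le x y \<Longrightarrow> le y z \<Longrightarrow> le x z"
  by (rule le_trans)

lemma le_antisym: "x \<in> L \<Longrightarrow> y \<in> L \<Longrightarrow> le x y \<Longrightarrow> le y x \<Longrightarrow> x = y"
  unfolding lat_le_def using mcomm by force

lemma meet_le1: "x \<in> L \<Longrightarrow> y \<in> L \<Longrightarrow> le (meet x y) x"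
proof -
  assume h: "x \<in> L" "y \<in> L"
  have "meet (meet x y) x = meet x (meet x y)" using mcomm[OF mc[OF h] h(1)] .
  also have "\<dots> = meet (meet x x) y" using massoc[OF h(1) h(1) h(2)] by simp
  also have "\<dots> = meet x y" using midem[OF h(1)] by simp
  finally show ?thesis unfolding lat_le_def .
qed

lemma meet_le2: "x \<in> L \<Longrightarrow> y \<in> L \<Longrightarrow> le (meet x y) y"
proof -
  assume h: "x \<in> L" "y \<in> L"
  have "meet (meet x y) y = meet x (meet y y)" using massoc[OF h(1) h(2) h(2)] .
  also have "\<dots> = meet x y" using midem[OF h(2)] by simp
  finally show ?thesis unfolding lat_le_def .
qed

lemma le_meet: "x \<in> L \<Longrightarrow> y \<in> L \<Longrightarrow> z \<in> L \<Longrightarrow> le z (meet x y) \<longleftrightarrow> le z x \<and> le z y"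
proof
  assume h: "x \<in> L" "y \<in> L" "z \<in> L" "le z (meet x y)"
  show "le z x \<and> le z y"
    using le_trans[OF h(3) mc[OF h(1,2)] h(1) h(4) meet_le1[OF h(1,2)]]
      le_trans[OF h(3) mc[OF h(1,2)] h(2) h(4) meet_le2[OF h(1,2)]] by simp
next
  assume h: "x \<in> L" "y \<in> L" "z \<in> L" "le z x \<and> le z y"
  have "meet z (meet x y) = meet (meet z x) y" using massoc[OF h(3) h(1) h(2)] by simp
  also have "\<dots> = z" using h(4) unfolding lat_le_def by simp
  finally show "le z (meet x y)" unfolding lat_le_def .
qed

lemma le_join_iff: "x \<in> L \<Longrightarrow> y \<in> L \<Longrightarrow> le x y \<longleftrightarrow> join x y = y"
proof
  assume h: "x \<in> L" "y \<in> L" "le x y"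
  have "join y (meet y x) = y" using abs1[OF h(2) h(1)] .
  then show "join x y = y" using h(3) mcomm[OF h(1,2)] jcomm[OF h(1,2)] unfolding lat_le_def by simp
next
  assume h: "x \<in> L" "y \<in> L" "join x y = y"
  have "meet x (join x y) = x" using abs2[OF h(1,2)] .
  then show "le x y" using h(3) unfolding lat_le_def by simp
qed

lemma join_le: "x \<in> L \<Longrightarrow> y \<in> L \<Longrightarrow> z \<in> L \<Longrightarrow> le x z \<Longrightarrow> le y z \<Longrightarrow> le (join x y) z"
proof -
  assume h: "x \<in> L" "y \<in> L" "z \<in> L" "le x z" "le y z"
  have "join (join x y) z = join x (join y z)" using jassoc[OF h(1-3)] .
  also have "\<dots> = z" using le_join_iff h by simp
  finally show ?thesis using le_join_iff[OF jc[OF h(1,2)] h(3)] by simp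
qed

lemma join_ge1: "x \<in> L \<Longrightarrow> y \<in> L \<Longrightarrow> le x (join x y)"
  by (simp add: abs2 lat_le_def)
lemma join_ge2: "x \<in> L \<Longrightarrow> y \<in> L \<Longrightarrow> le y (join x y)"
  using join_ge1[of y x] jcomm[of x y] by simp

lemma unitl: "x \<in> L \<Longrightarrow> mult e x = x"
  using mucomm[OF eL, of x] unit[of x] by simp

lemma lcomm: "x \<in> L \<Longrightarrow> y \<in> L \<Longrightarrow> z \<in> L \<Longrightarrow> mult x (mult y z) = mult y (mult x z)"
proof -
  assume h: "x \<in> L" "y \<in> L" "z \<in> L"
  have "mult x (mult y z) = mult (mult x y) z" using h muassoc by simp
  also have "\<dots> = mult (mult y x) z" using h mucomm[of x y] by simp
  also have "\<dots> = mult y (mult x z)" using h muassoc by simp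
  finally show ?thesis .
qed

lemma res2: "x \<in> L \<Longrightarrow> y \<in> L \<Longrightarrow> z \<in> L \<Longrightarrow> le (mult x y) z \<longleftrightarrow> le y (imp x z)"
  using mucomm[of x y] res[of y x z] by simp

lemma mp: "x \<in> L \<Longrightarrow> y \<in> L \<Longrightarrow> le (mult (imp x y) x) y"
  using res[of "imp x y" x y] ic[of x y] le_refl[of "imp x y"] by simp

lemma mult_mono: "x \<in> L \<Longrightarrow> x' \<in> L \<Longrightarrow> y \<in> L \<Longrightarrow> le x x' \<Longrightarrow> le (mult x y) (mult x' y)"
proof -
  assume h: "x \<in> L" "x' \<in> L" "y \<in> L" "le x x'"
  have "le x' (imp y (mult x' y))" using res[OF h(2,3) muc[OF h(2,3)]] le_refl[OF muc[OF h(2,3)]] by simp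
  then have "le x (imp y (mult x' y))" using lt[OF h(1,2) ic[OF h(3) muc[OF h(2,3)]] h(4)] by simp
  then show ?thesis using res[OF h(1,3) muc[OF h(2,3)]] by simp
qed

lemma mult_mono2: "x \<in> L \<Longrightarrow> x' \<in> L \<Longrightarrow> y \<in> L \<Longrightarrow> y' \<in> L \<Longrightarrow> le x x' \<Longrightarrow> le y y'
   \<Longrightarrow> le (mult x y) (mult x' y')"
proof -
  assume h: "x \<in> L" "x' \<in> L" "y \<in> L" "y' \<in> L" "le x x'" "le y y'"
  have 1: "le (mult x y) (mult x' y)" using mult_mono[OF h(1-3,5)] .
  have "le (mult y x') (mult y' x')" using mult_mono[OF h(3,4,2,6)] .
  then have 2: "le (mult x' y) (mult x' y')" using mucomm[OF h(3,2)] mucomm[OF h(4,2)] by simp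
  show ?thesis using lt[OF muc[OF h(1,3)] muc[OF h(2,3)] muc[OF h(2,4)] 1 2] .
qed

lemma imp_mono: "y \<in> L \<Longrightarrow> z \<in> L \<Longrightarrow> z' \<in> L \<Longrightarrow> le z z' \<Longrightarrow> le (imp y z) (imp y z')"
proof -
  assume h: "y \<in> L" "z \<in> L" "z' \<in> L" "le z z'"
  have "le (mult (imp y z) y) z'" using lt[OF muc[OF ic[OF h(1,2)] h(1)] h(2,3) mp[OF h(1,2)] h(4)] .
  then show ?thesis using res[OF ic[OF h(1,2)] h(1,3)] by simp
qed

lemma imp_anti: "y \<in> L \<Longrightarrow> y' \<in> L \<Longrightarrow> z \<in> L \<Longrightarrow> le y y' \<Longrightarrow> le (imp y' z) (imp y z)"
proof -
  assume h: "y \<in> L" "y' \<in> L" "z \<in> L" "le y y'"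
  have i: "imp y' z \<in> L" using ic[OF h(2,3)] .
  have "le (mult y (imp y' z)) (mult y' (imp y' z))" using mult_mono[OF h(1,2) i h(4)] .
  then have "le (mult (imp y' z) y) (mult (imp y' z) y')"
    using mucomm[OF h(1) i] mucomm[OF h(2) i] by simp
  then have "le (mult (imp y' z) y) z" using lt[OF muc[OF i h(1)] muc[OF i h(2)] h(3) _ mp[OF h(2,3)]] by simp
  then show ?thesis using res[OF i h(1,3)] by simp
qed

lemma e_imp: "x \<in> L \<Longrightarrow> y \<in> L \<Longrightarrow> le x y \<Longrightarrow> le e (imp x y)"
  using res[of e x y] unitl[of x] eL by simp

lemma imp_F: "x \<in> L \<Longrightarrow> y \<in> L \<Longrightarrow> le x y \<Longrightarrow> imp x y \<in> F"
  using Fup[OF eF ic e_imp] by simp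

lemma comp: "x \<in> L \<Longrightarrow> y \<in> L \<Longrightarrow> z \<in> L \<Longrightarrow> le (mult (imp x y) (imp y z)) (imp x z)"
proof -
  assume h: "x \<in> L" "y \<in> L" "z \<in> L"
  have L1: "imp x y \<in> L" "imp y z \<in> L" "mult (imp x y) x \<in> L" "mult (imp y z) y \<in> L"
    "mult (imp y z) (mult (imp x y) x) \<in> L" using h by (simp_all add: ic muc)
  have eq: "mult (mult (imp x y) (imp y z)) x = mult (imp y z) (mult (imp x y) x)"
    using h muassoc[of "imp x y" "imp y z" x] lcomm[of "imp x y" "imp y z" x] by (simp add: ic)
  have "le (mult (mult (imp x y) x) (imp y z)) (mult y (imp y z))"
    using h L1 mult_mono[of "mult (imp x y) x" y "imp y z"] mp[of x y] by simp
  then have 2: "le (mult (imp y z) (mult (imp x y) x)) (mult (imp y z) y)"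
    using h L1 mucomm[of "imp y z" "mult (imp x y) x"] mucomm[of "imp y z" y] by simp
  have 3: "le (mult (imp y z) y) z" using h mp by blast
  have "le (mult (mult (imp x y) (imp y z)) x) z"
    unfolding eq using lt[OF L1(5) L1(4) h(3) 2 3] .
  then show ?thesis using h res[of "mult (imp x y) (imp y z)" x z] by (simp add: ic muc)
qed

lemma curry: "x \<in> L \<Longrightarrow> y \<in> L \<Longrightarrow> z \<in> L \<Longrightarrow> imp (mult x y) z = imp x (imp y z)"
proof -
  assume h: "x \<in> L" "y \<in> L" "z \<in> L"
  have k: "le w (imp (mult x y) z) \<longleftrightarrow> le w (imp x (imp y z))" if "w \<in> L" for w
    using h that res[of w "mult x y" z] res[of "mult w x" y z] res[of w x "imp y z"] muassoc[of w x y]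
    by (simp add: ic muc)
  show ?thesis using k[of "imp (mult x y) z"] k[of "imp x (imp y z)"] h
    using le_antisym[OF ic[OF muc[OF h(1,2)] h(3)] ic[OF h(1) ic[OF h(2,3)]]]
      le_refl[OF ic[OF muc[OF h(1,2)] h(3)]] le_refl[OF ic[OF h(1) ic[OF h(2,3)]]]
      ic[OF muc[OF h(1,2)] h(3)] ic[OF h(1) ic[OF h(2,3)]] by simp
qed

lemma Ftrans: "x \<in> L \<Longrightarrow> y \<in> L \<Longrightarrow> z \<in> L \<Longrightarrow> imp x y \<in> F \<Longrightarrow> imp y z \<in> F \<Longrightarrow> imp x z \<in> F"
proof -
  assume h: "x \<in> L" "y \<in> L" "z \<in> L" "imp x y \<in> F" "imp y z \<in> F"
  show ?thesis using Fup[OF Fmu[OF h(4,5)] ic[OF h(1,3)] comp[OF h(1-3)]] .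
qed

definition rel where "rel x y \<longleftrightarrow> imp x y \<in> F \<and> imp y x \<in> F"

lemma rel_refl: "x \<in> L \<Longrightarrow> rel x x"
  by (simp add: imp_F le_refl rel_def)

lemma cls_eq: "a \<in> L \<Longrightarrow> b \<in> L \<Longrightarrow> fclass L imp F a = fclass L imp F b \<longleftrightarrow> rel a b"
  unfolding fclass_def rel_def
  apply (rule iffI)
   apply (drule equalityD2)
   apply (drule subsetD[of _ _ b])
    apply (simp add: rel_refl[unfolded rel_def])
   apply simp
  apply (auto intro: Ftrans)
  done

lemma in_cls: "x \<in> L \<Longrightarrow> x \<in> fclass L imp F x"
  using rel_refl unfolding rel_def fclass_def by auto

lemma qop_cong:
  assumes fc: "\<And>x y. x \<in> L \<Longrightarrow> y \<in> L \<Longrightarrow> f x y \<in> L"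
    and cg: "\<And>x y x' y'. x \<in> L \<Longrightarrow> y \<in> L \<Longrightarrow> x' \<in> L \<Longrightarrow> y' \<in> L \<Longrightarrow> rel x x' \<Longrightarrow> rel y y'
       \<Longrightarrow> imp (f x y) (f x' y') \<in> F"
    and x: "x \<in> L" and y: "y \<in> L"
  shows "qop L imp F f (fclass L imp F x) (fclass L imp F y) = fclass L imp F (f x y)"
proof -
  define a where "a = (SOME a. a \<in> fclass L imp F x)"
  define b where "b = (SOME b. b \<in> fclass L imp F y)"
  have a: "a \<in> fclass L imp F x" unfolding a_def using in_cls[OF x] by (rule someI)
  have b: "b \<in> fclass L imp F y" unfolding b_def using in_cls[OF y] by (rule someI)
  have aL: "a \<in> L" "rel x a" using a unfolding fclass_def rel_def by auto
  have bL: "b \<in> L" "rel y b" using b unfolding fclass_def rel_def by auto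
  have "rel (f a b) (f x y)" unfolding rel_def
    using cg[OF aL(1) bL(1) x y] cg[OF x y aL(1) bL(1)] aL bL unfolding rel_def by auto
  then show ?thesis unfolding qop_def a_def[symmetric] b_def[symmetric]
    using cls_eq fc aL bL x y by auto
qed

lemmas cl = jc mc muc ic

lemma cg_join: "x \<in> L \<Longrightarrow> y \<in> L \<Longrightarrow> x' \<in> L \<Longrightarrow> y' \<in> L \<Longrightarrow> rel x x' \<Longrightarrow> rel y y'
       \<Longrightarrow> imp (join x y) (join x' y') \<in> F"
proof -
  assume h: "x \<in> L" "y \<in> L" "x' \<in> L" "y' \<in> L" "rel x x'" "rel y y'"
  let ?w = "meet (imp x x') (imp y y')"
  let ?j = "join x' y'"
  have wF: "?w \<in> F" using h Fme unfolding rel_def by auto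
  have wL: "?w \<in> L" using h by (simp add: cl)
  have jL: "?j \<in> L" using h by (simp add: cl)
  have "le ?w (imp x ?j)"
    apply (rule lt[of _ "imp x x'"])
    using h by (simp_all add: cl meet_le1 imp_mono join_ge1)
  then have 1: "le x (imp ?w ?j)" using h wL jL res2[of ?w x ?j] res[of ?w x ?j] by simp
  have "le ?w (imp y ?j)"
    apply (rule lt[of _ "imp y y'"])
    using h by (simp_all add: cl meet_le2 imp_mono join_ge2)
  then have 2: "le y (imp ?w ?j)" using h wL jL res2[of ?w y ?j] res[of ?w y ?j] by simp
  have "le (join x y) (imp ?w ?j)" using 1 2 h wL jL by (simp add: cl join_le)
  then have "le ?w (imp (join x y) ?j)"
    using h wL jL res2[of ?w "join x y" ?j] res[of ?w "join x y" ?j] by (simp add: cl)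
  then show ?thesis using wF Fup h by (simp add: cl)
qed

lemma cg_meet: "x \<in> L \<Longrightarrow> y \<in> L \<Longrightarrow> x' \<in> L \<Longrightarrow> y' \<in> L \<Longrightarrow> rel x x' \<Longrightarrow> rel y y'
       \<Longrightarrow> imp (meet x y) (meet x' y') \<in> F"
proof -
  assume h: "x \<in> L" "y \<in> L" "x' \<in> L" "y' \<in> L" "rel x x'" "rel y y'"
  let ?w = "meet (imp x x') (imp y y')"
  let ?m = "meet x y"
  have wF: "?w \<in> F" using h Fme unfolding rel_def by auto
  have wL: "?w \<in> L" using h by (simp add: cl)
  have mL: "?m \<in> L" using h by (simp add: cl)
  have "le ?w (imp ?m x')"
    apply (rule lt[of _ "imp x x'"])
    using h by (simp_all add: cl meet_le1 imp_anti)
  then have 1: "le (mult ?w ?m) x'" using h wL mL res[of ?w ?m x'] by simp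
  have "le ?w (imp ?m y')"
    apply (rule lt[of _ "imp y y'"])
    using h by (simp_all add: cl meet_le2 imp_anti)
  then have 2: "le (mult ?w ?m) y'" using h wL mL res[of ?w ?m y'] by simp
  have "le (mult ?w ?m) (meet x' y')" using 1 2 h wL mL le_meet by (simp add: cl)
  then have "le ?w (imp ?m (meet x' y'))" using h wL mL res[of ?w ?m "meet x' y'"] by (simp add: cl)
  then show ?thesis using wF Fup h by (simp add: cl)
qed

lemma cg_mult: "x \<in> L \<Longrightarrow> y \<in> L \<Longrightarrow> x' \<in> L \<Longrightarrow> y' \<in> L \<Longrightarrow> rel x x' \<Longrightarrow> rel y y'
       \<Longrightarrow> imp (mult x y) (mult x' y') \<in> F"
proof -
  assume h: "x \<in> L" "y \<in> L" "x' \<in> L" "y' \<in> L" "rel x x'" "rel y y'"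
  let ?a = "imp x x'" and ?b = "imp y y'"
  let ?w = "mult ?a ?b"
  have aL: "?a \<in> L" "?b \<in> L" using h by (simp_all add: cl)
  have wF: "?w \<in> F" using h Fmu unfolding rel_def by auto
  have "mult ?w (mult x y) = mult ?a (mult ?b (mult x y))" using h aL by (simp add: cl muassoc)
  also have "\<dots> = mult ?a (mult x (mult ?b y))" using h aL lcomm[of ?b x y] by simp
  also have "\<dots> = mult (mult ?a x) (mult ?b y)" using h aL by (simp add: cl muassoc)
  finally have eq: "mult ?w (mult x y) = mult (mult ?a x) (mult ?b y)" .
  have "le (mult (mult ?a x) (mult ?b y)) (mult x' y')"
    using h aL by (simp add: cl mp mult_mono2)
  then have "le ?w (imp (mult x y) (mult x' y'))" using h aL eq res[of ?w "mult x y" "mult x' y'"]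
    by (simp add: cl)
  then show ?thesis using wF Fup h by (simp add: cl)
qed

lemma cg_imp: "x \<in> L \<Longrightarrow> y \<in> L \<Longrightarrow> x' \<in> L \<Longrightarrow> y' \<in> L \<Longrightarrow> rel x x' \<Longrightarrow> rel y y'
       \<Longrightarrow> imp (imp x y) (imp x' y') \<in> F"
proof -
  assume h: "x \<in> L" "y \<in> L" "x' \<in> L" "y' \<in> L" "rel x x'" "rel y y'"
  let ?a = "imp x' x" and ?b = "imp y y'" and ?c = "imp x y"
  let ?w = "mult ?a ?b"
  have aL: "?a \<in> L" "?b \<in> L" "?c \<in> L" "imp x' y \<in> L" "imp x' y' \<in> L" using h by (simp_all add: cl)
  have wF: "?w \<in> F" using h Fmu unfolding rel_def by auto
  have 1: "le (mult ?a ?c) (imp x' y)" using h comp by blast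
  have "le (mult (mult ?a ?c) ?b) (mult (imp x' y) ?b)"
    using 1 h aL by (simp add: cl mult_mono)
  moreover have "le (mult (imp x' y) ?b) (imp x' y')" using h comp by blast
  ultimately have "le (mult (mult ?a ?c) ?b) (imp x' y')"
    using h aL lt[of "mult (mult ?a ?c) ?b" "mult (imp x' y) ?b" "imp x' y'"] by (simp add: cl)
  moreover have "mult (mult ?a ?c) ?b = mult ?w ?c"
    using h aL muassoc[of ?a ?c ?b] muassoc[of ?a ?b ?c] mucomm[of ?c ?b] by simp
  ultimately have "le ?w (imp ?c (imp x' y'))" using h aL res[of ?w ?c "imp x' y'"] by (simp add: cl)
  then show ?thesis using wF Fup h by (simp add: cl)
qed

lemma qj: "x \<in> L \<Longrightarrow> y \<in> L \<Longrightarrow> qop L imp F join (fclass L imp F x) (fclass L imp F y) = fclass L imp F (join x y)"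
  by (rule qop_cong[OF jc cg_join])
lemma qm: "x \<in> L \<Longrightarrow> y \<in> L \<Longrightarrow> qop L imp F meet (fclass L imp F x) (fclass L imp F y) = fclass L imp F (meet x y)"
  by (rule qop_cong[OF mc cg_meet])
lemma qmu: "x \<in> L \<Longrightarrow> y \<in> L \<Longrightarrow> qop L imp F mult (fclass L imp F x) (fclass L imp F y) = fclass L imp F (mult x y)"
  by (rule qop_cong[OF muc cg_mult])
lemma qi: "x \<in> L \<Longrightarrow> y \<in> L \<Longrightarrow> qop L imp F imp (fclass L imp F x) (fclass L imp F y) = fclass L imp F (imp x y)"
  by (rule qop_cong[OF ic cg_imp])

lemma qle: "x \<in> L \<Longrightarrow> y \<in> L \<Longrightarrow>
   lat_le (qop L imp F meet) (fclass L imp F x) (fclass L imp F y) \<longleftrightarrow> imp x y \<in> F"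
proof -
  assume h: "x \<in> L" "y \<in> L"
  have mL: "meet x y \<in> L" using h by (simp add: cl)
  have "lat_le (qop L imp F meet) (fclass L imp F x) (fclass L imp F y) \<longleftrightarrow> rel (meet x y) x"
    unfolding lat_le_def qm[OF h] using cls_eq[OF mL h(1)] .
  also have "\<dots> \<longleftrightarrow> imp x (meet x y) \<in> F"
    unfolding rel_def using h imp_F[OF mL h(1) meet_le1[OF h]] by auto
  also have "\<dots> \<longleftrightarrow> imp x y \<in> F"
  proof
    assume a: "imp x (meet x y) \<in> F"
    have "le (imp x (meet x y)) (imp x y)" using h mL by (simp add: imp_mono meet_le2)
    then show "imp x y \<in> F" using h a Fup by (simp add: cl)
  next
    assume a: "imp x y \<in> F"
    have xx: "imp x x \<in> F" using h imp_F le_refl by blast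
    let ?w = "meet (imp x x) (imp x y)"
    have wL: "?w \<in> L" using h by (simp add: cl)
    have "le ?w (imp x x)" using h by (simp add: cl meet_le1)
    then have 1: "le (mult ?w x) x" using h wL res[of ?w x x] by simp
    have "le ?w (imp x y)" using h by (simp add: cl meet_le2)
    then have 2: "le (mult ?w x) y" using h wL res[of ?w x y] by simp
    have "le (mult ?w x) (meet x y)" using 1 2 h wL le_meet by (simp add: cl)
    then have "le ?w (imp x (meet x y))" using h wL mL res[of ?w x "meet x y"] by simp
    then show "imp x (meet x y) \<in> F" using Fme[OF xx a] Fup h by (simp add: cl)
  qed
  finally show ?thesis .
qed

lemma top: "x \<in> L \<Longrightarrow> le x (imp bt bt)"
  using res[of x bt bt] res[of bt x bt] btL btle[OF ic[of x bt]] mucomm[of x bt] by simp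

lemma topF: "x \<in> L \<Longrightarrow> imp x e \<in> F"
proof -
  assume x: "x \<in> L"
  show ?thesis using Fup[OF aff ic[OF x eL] imp_anti[OF x ic[OF btL btL] eL top[OF x]]] .
qed

lemma botF: "x \<in> L \<Longrightarrow> imp bt x \<in> F"
  using imp_F[OF btL _ btle] by simp

lemma cimg: "fclass L imp F x \<in> quot L imp F" if "x \<in> L" for x
  unfolding quot_def using that by (rule imageI)

lemma ballQ: "(\<forall>A\<in>quot L imp F. P A) \<longleftrightarrow> (\<forall>x\<in>L. P (fclass L imp F x))"
  unfolding quot_def by blast

lemma main:
  "residuated_lattice (quot L imp F) (qop L imp F join) (qop L imp F meet)
             (fclass L imp F bt) (qop L imp F imp) (qop L imp F mult) (fclass L imp F e)"
proof -
  let ?C = "fclass L imp F" and ?Q = "quot L imp F"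
  have l1: "\<forall>x\<in>L. \<forall>y\<in>L. ?C (join x y) \<in> ?Q \<and> ?C (meet x y) \<in> ?Q"
    by (simp add: cl cimg)
  have l2: "\<forall>x\<in>L. \<forall>y\<in>L. ?C (join x y) = ?C (join y x) \<and> ?C (meet x y) = ?C (meet y x)"
    using jcomm mcomm by simp
  have l3: "\<forall>x\<in>L. \<forall>y\<in>L. \<forall>z\<in>L. ?C (join (join x y) z) = ?C (join x (join y z)) \<and>
       ?C (meet (meet x y) z) = ?C (meet x (meet y z))"
    using jassoc massoc by simp
  have l4: "\<forall>x\<in>L. \<forall>y\<in>L. ?C (join x (meet x y)) = ?C x \<and> ?C (meet x (join x y)) = ?C x"
    using abs1 abs2 by simp
  have lat: "is_lattice ?Q (qop L imp F join) (qop L imp F meet)"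
    unfolding is_lattice_def ballQ using l1 l2 l3 l4 by (simp add: qj qm cl)
  have bot: "\<forall>x\<in>?Q. lat_le (qop L imp F meet) (?C bt) x"
    unfolding ballQ by (simp add: qle btL botF)
  have top: "\<forall>x\<in>?Q. lat_le (qop L imp F meet) x (?C e)"
    unfolding ballQ by (simp add: qle eL topF)
  have m1: "\<forall>x\<in>L. \<forall>y\<in>L. ?C (mult x y) \<in> ?Q" by (simp add: cl cimg)
  have m2: "\<forall>x\<in>L. \<forall>y\<in>L. \<forall>z\<in>L. ?C (mult (mult x y) z) = ?C (mult x (mult y z))"
    using muassoc by simp
  have m3: "\<forall>x\<in>L. \<forall>y\<in>L. ?C (mult x y) = ?C (mult y x)" using mucomm by simp
  have m4: "\<forall>x\<in>L. ?C (mult x e) = ?C x" using unit by simp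
  have mon: "is_comm_monoid ?Q (qop L imp F mult) (?C e)"
    unfolding is_comm_monoid_def ballQ using m1 m2 m3 m4 cimg[OF eL] by (simp add: qmu cl eL)
  have r1: "\<forall>x\<in>L. \<forall>y\<in>L. ?C (imp x y) \<in> ?Q" by (simp add: cl cimg)
  have r2: "\<forall>x\<in>L. \<forall>y\<in>L. \<forall>z\<in>L. (imp (mult x y) z \<in> F) = (imp x (imp y z) \<in> F)"
    using curry by simp
  have rs: "residuated ?Q (qop L imp F meet) (qop L imp F imp) (qop L imp F mult)"
    unfolding residuated_def ballQ using r1 r2 by (simp add: qmu qi qle cl)
  show ?thesis unfolding residuated_lattice_def
    using lat bot top mon rs cimg[OF btL] cimg[OF eL] by simp
qed

end

theorem mainTheorem12:
  fixes L :: "'a set" and F :: "'a set"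
    and join meet imp mult :: "'a \<Rightarrow> 'a \<Rightarrow> 'a" and bt e :: 'a
  assumes "IL_algebra L join meet bt imp mult e"
    and "affine_filter L meet bt imp mult e F"
  shows "(\<forall>x\<in>L. \<forall>y\<in>L.
            qop L imp F join (fclass L imp F x) (fclass L imp F y) = fclass L imp F (join x y) \<and>
            qop L imp F meet (fclass L imp F x) (fclass L imp F y) = fclass L imp F (meet x y) \<and>
            qop L imp F mult (fclass L imp F x) (fclass L imp F y) = fclass L imp F (mult x y) \<and>
            qop L imp F imp (fclass L imp F x) (fclass L imp F y) = fclass L imp F (imp x y))
         \<and> residuated_lattice (quot L imp F) (qop L imp F join) (qop L imp F meet)
             (fclass L imp F bt) (qop L imp F imp) (qop L imp F mult) (fclass L imp F e)"
proof -
  interpret ILF L F join meet imp mult bt e using assms by unfold_locales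
  show ?thesis by (simp add: qj qm qmu qi main)
qed

end
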